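(* Let $n\ge1$ and $K=[1/\max(i,j)]_{i,j=1}^n$. Then $K$ is invertible, $\|K\|\le 4$, and $\|K^{-1}\|\le 4n^2$, where $\|\cdot\|$ denotes the operator (spectral) norm. *)

theory Defs
  imports "HOL-Analysis.Analysis"
begin

text \<open>The index type 'n (of cardinality n = CARD('n)) is linearly ordered;
  idx i is the 1-based position of i, so idx is a bijection onto {1..n}.\<close>
definition idx :: "'n::{finite,linorder} \<Rightarrow> nat" where
  "idx i = card {j. j \<le> i}"

definition Kmat :: "real ^ 'n::{finite,linorder} ^ 'n::{finite,linorder}" where
  "Kmat = (\<chi> i j. 1 / real (max (idx i) (idx j)))"

end

theory Submission imports Defs begin


lemma sqrt_sum_le: "(\<Sum>j=1..i. 1 / sqrt (real j)) \<le> 2 * sqrt (real i)"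
proof (induction i)
  case 0 then show ?case by simp
next
  case (Suc i)
  define a where "a = sqrt (real i)"
  define b where "b = sqrt (real (Suc i))"
  have a0: "a \<ge> 0" and bp: "b > 0" and ab: "a < b" and sq: "b^2 = a^2 + 1"
    by (auto simp: a_def b_def)
  have "1 / b \<le> 2 * b - 2 * a"
  proof -
    have "(b - a) * (b + a) = 1" using sq by (simp add: algebra_simps power2_eq_square)
    hence "2 * b - 2 * a = 2 / (a + b)" using a0 bp by (simp add: field_simps) 
    moreover have "1 / b \<le> 2 / (a + b)" using a0 bp ab by (simp add: field_simps)
    ultimately show ?thesis by simp
  qed
  then show ?case using Suc by (simp add: b_def a_def)
qed

lemma tail_sum_le:
  assumes "i \<ge> 1"
  shows "n \<ge> i \<Longrightarrow> (\<Sum>j\<in>{i<..n}. 1 / (real j * sqrt (real j))) \<le> 2 / sqrt (real i) - 2 / sqrt (real n)"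
proof (induction n)
  case 0 then show ?case using assms by simp
next
  case (Suc n)
  show ?case
  proof (cases "i = Suc n")
    case True then show ?thesis by simp
  next
    case False
    hence ni: "n \<ge> i" using Suc by simp
    define a where "a = sqrt (real n)"
    define b where "b = sqrt (real (Suc n))"
    have ap: "a > 0" and bp: "b > 0" and ab: "a < b" and sq: "b^2 = a^2 + 1"
      using ni assms by (auto simp: a_def b_def)
    have key: "1 / (b^2 * b) \<le> 2 / a - 2 / b"
    proof -
      have "2 / a - 2 / b = 2 * (b - a) / (a * b)" using ap bp by (simp add: field_simps)
      also have "\<dots> = 2 * ((b - a) * (a + b)) / (a * b * (a + b))"
      proof -
        have "a + b \<noteq> 0" using ap bp by simp
        then show ?thesis using mult_divide_mult_cancel_right[of "a+b" "2 * (b - a)" "a * b"] by (simp add: mult.assoc)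
      qed
      also have "(b - a) * (a + b) = 1" using sq by (simp add: algebra_simps power2_eq_square)
      also have "2 * 1 / (a * b * (a + b)) = 2 / (a * b * (a + b))" by simp
      finally have e: "2 / a - 2 / b = 2 / (a * b * (a + b))" .
      have "a * b * (a + b) \<le> 2 * (b^2 * b)"
      proof -
        have "a * b \<le> b * b" using ab bp by (intro mult_right_mono) auto
        moreover have "a + b \<le> 2 * b" using ab by simp
        ultimately have "a * b * (a + b) \<le> b * b * (2 * b)" using ap bp by (intro mult_mono) auto
        then show ?thesis by (simp add: power2_eq_square algebra_simps)
      qed
      hence "2 / (2 * (b^2 * b)) \<le> 2 / (a * b * (a + b))" using ap bp
        by (intro divide_left_mono) auto
      hence "1 / (b^2 * b) \<le> 2 / (a * b * (a + b))" by simp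
      with e show ?thesis by simp
    qed
    have bsq: "b^2 = real (Suc n)" by (simp add: b_def)
    have "{i<..Suc n} = insert (Suc n) {i<..n}" using ni by auto
    hence "(\<Sum>j\<in>{i<..Suc n}. 1 / (real j * sqrt (real j))) = 1 / (real (Suc n) * b) + (\<Sum>j\<in>{i<..n}. 1 / (real j * sqrt (real j)))"
      by (simp add: b_def)
    also have "\<dots> \<le> 1 / (b^2 * b) + (2 / sqrt (real i) - 2 / a)"
      using Suc.IH[OF ni] bsq by (simp add: a_def)
    also have "\<dots> \<le> 2 / sqrt (real i) - 2 / b" using key by simp
    finally show ?thesis by (simp add: b_def)
  qed
qed


lemma row_bound:
  assumes "1 \<le> i" "i \<le> n"
  shows "(\<Sum>j=1..n. (1 / sqrt (real j)) / real (max i j)) \<le> 4 / sqrt (real i)"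
proof -
  have split: "{1..n} = {1..i} \<union> {i<..n}" using assms by auto
  have "(\<Sum>j=1..n. (1 / sqrt (real j)) / real (max i j))
      = (\<Sum>j=1..i. (1 / sqrt (real j)) / real (max i j)) + (\<Sum>j\<in>{i<..n}. (1 / sqrt (real j)) / real (max i j))"
    unfolding split by (rule sum.union_disjoint) auto
  also have "(\<Sum>j=1..i. (1 / sqrt (real j)) / real (max i j)) = (\<Sum>j=1..i. 1 / sqrt (real j)) / real i"
    unfolding sum_divide_distrib by (intro sum.cong) (auto simp: max_def)
  also have "(\<Sum>j\<in>{i<..n}. (1 / sqrt (real j)) / real (max i j)) = (\<Sum>j\<in>{i<..n}. 1 / (real j * sqrt (real j)))"
    by (intro sum.cong) (auto simp: max_def)
  also have "(\<Sum>j=1..i. 1 / sqrt (real j)) / real i \<le> 2 * sqrt (real i) / real i"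
    using sqrt_sum_le[of i] assms by (intro divide_right_mono) auto
  also have "2 * sqrt (real i) / real i = 2 / sqrt (real i)"
    using assms by (metis divide_divide_eq_right of_nat_0_le_iff real_div_sqrt times_divide_eq_right)
  also have "(\<Sum>j\<in>{i<..n}. 1 / (real j * sqrt (real j))) \<le> 2 / sqrt (real i) - 2 / sqrt (real n)"
    using tail_sum_le[OF assms(1) assms(2)] .
  also have "\<dots> \<le> 2 / sqrt (real i)" by simp
  finally show ?thesis by simp
qed

lemma wcs:
  fixes p y :: "'a \<Rightarrow> real"
  assumes "\<And>j. j \<in> A \<Longrightarrow> p j \<ge> 0"
  shows "(\<Sum>j\<in>A. p j * y j)^2 \<le> (\<Sum>j\<in>A. p j) * (\<Sum>j\<in>A. p j * (y j)^2)"
proof -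
  have "(\<Sum>j\<in>A. p j * y j) = (\<Sum>j\<in>A. sqrt (p j) * (sqrt (p j) * y j))"
    using assms by (intro sum.cong) (auto simp: mult.assoc[symmetric])
  also have "(\<dots>)^2 \<le> (\<Sum>j\<in>A. (sqrt (p j))^2) * (\<Sum>j\<in>A. (sqrt (p j) * y j)^2)"
    by (rule Cauchy_Schwarz_ineq_sum)
  also have "\<dots> = (\<Sum>j\<in>A. p j) * (\<Sum>j\<in>A. p j * (y j)^2)"
    using assms by (simp add: power_mult_distrib)
  finally show ?thesis .
qed

lemma upper_nat:
  fixes f :: "nat \<Rightarrow> real"
  shows "(\<Sum>i=1..n. (\<Sum>j=1..n. f j / real (max i j))^2) \<le> 16 * (\<Sum>i=1..n. (f i)^2)"
proof -
  define w where "w j = 1 / sqrt (real j)" for j :: nat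
  define K where "K i j = 1 / real (max i j :: nat)" for i j :: nat
  have wpos: "w j > 0" if "j \<in> {1..n}" for j using that by (auto simp: w_def)
  have Kpos: "K i j \<ge> 0" for i j by (simp add: K_def)
  have Ksym: "K i j = K j i" for i j by (simp add: K_def max.commute)
  have row: "(\<Sum>j=1..n. K i j * w j) \<le> 4 * w i" if "i \<in> {1..n}" for i
    using row_bound[of i n] that by (simp add: K_def w_def mult.commute)
  have step: "(\<Sum>j=1..n. f j / real (max i j))^2 \<le> 4 * w i * (\<Sum>j=1..n. K i j * (f j)^2 / w j)"
    if i: "i \<in> {1..n}" for i
  proof -
    have "(\<Sum>j=1..n. f j / real (max i j)) = (\<Sum>j=1..n. (K i j * w j) * (f j / w j))"
    proof (intro sum.cong refl)
      fix j assume "j \<in> {1..n}"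
      then have "w j \<noteq> 0" using wpos by force
      then show "f j / real (max i j) = (K i j * w j) * (f j / w j)" by (simp add: K_def)
    qed
    also have "(\<dots>)^2 \<le> (\<Sum>j=1..n. K i j * w j) * (\<Sum>j=1..n. (K i j * w j) * (f j / w j)^2)"
      using wpos Kpos by (intro wcs) (auto intro: mult_nonneg_nonneg less_imp_le)
    also have "(\<Sum>j=1..n. (K i j * w j) * (f j / w j)^2) = (\<Sum>j=1..n. K i j * (f j)^2 / w j)"
      using wpos by (intro sum.cong) (auto simp: power2_eq_square field_simps)
    also have "(\<Sum>j=1..n. K i j * w j) * (\<Sum>j=1..n. K i j * (f j)^2 / w j)
        \<le> 4 * w i * (\<Sum>j=1..n. K i j * (f j)^2 / w j)"
      using row[OF i] wpos Kpos by (intro mult_right_mono sum_nonneg) (auto intro: divide_nonneg_pos)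
    finally show ?thesis .
  qed
  have "(\<Sum>i=1..n. (\<Sum>j=1..n. f j / real (max i j))^2) \<le> (\<Sum>i=1..n. 4 * w i * (\<Sum>j=1..n. K i j * (f j)^2 / w j))"
    by (intro sum_mono step)
  also have "\<dots> = 4 * (\<Sum>j=1..n. ((f j)^2 / w j) * (\<Sum>i=1..n. K j i * w i))"
  proof -
    have "(\<Sum>i=1..n. 4 * w i * (\<Sum>j=1..n. K i j * (f j)^2 / w j)) = 4 * (\<Sum>i=1..n. \<Sum>j=1..n. w i * K i j * (f j)^2 / w j)"
      by (simp add: sum_distrib_left mult_ac)
    also have "(\<Sum>i=1..n. \<Sum>j=1..n. w i * K i j * (f j)^2 / w j) = (\<Sum>j=1..n. \<Sum>i=1..n. w i * K i j * (f j)^2 / w j)"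
      by (rule sum.swap)
    also have "\<dots> = (\<Sum>j=1..n. ((f j)^2 / w j) * (\<Sum>i=1..n. K j i * w i))"
      by (simp add: sum_distrib_left Ksym mult_ac)
    finally show ?thesis by simp
  qed
  also have "\<dots> \<le> 4 * (\<Sum>j=1..n. ((f j)^2 / w j) * (4 * w j))"
    using row wpos by (intro mult_left_mono sum_mono) (auto intro: divide_nonneg_pos)
  also have "\<dots> = 16 * (\<Sum>i=1..n. (f i)^2)"
  proof -
    have "(\<Sum>j=1..n. ((f j)^2 / w j) * (4 * w j)) = (\<Sum>j=1..n. 4 * (f j)^2)"
    proof (intro sum.cong refl)
      fix j assume "j \<in> {1..n}"
      then have "w j \<noteq> 0" using wpos by force
      then show "((f j)^2 / w j) * (4 * w j) = 4 * (f j)^2" by simp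
    qed
    then show ?thesis by (simp add: sum_distrib_left)
  qed
  finally show ?thesis .
qed



lemma Q_eq:
  fixes f :: "nat \<Rightarrow> real"
  defines "S \<equiv> \<lambda>k. \<Sum>j=1..k. f j"
  shows "(\<Sum>i=1..n. f i * (\<Sum>j=1..n. f j / real (max i j)))
     = (\<Sum>k=1..<n. (S k)^2 / (real k * real (Suc k))) + (S n)^2 / real n"
proof (induction n)
  case 0 then show ?case by (simp add: S_def)
next
  case (Suc m)
  let ?F = "f (Suc m)"
  have in1: "(\<Sum>j=1..Suc m. f j / real (max i j)) = (\<Sum>j=1..m. f j / real (max i j)) + ?F / real (Suc m)"
    if "i \<le> Suc m" for i using that by (simp add: max_def)
  have "(\<Sum>i=1..Suc m. f i * (\<Sum>j=1..Suc m. f j / real (max i j)))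
      = (\<Sum>i=1..Suc m. f i * (\<Sum>j=1..m. f j / real (max i j))) + S (Suc m) * ?F / real (Suc m)"
  proof -
    have "(\<Sum>i=1..Suc m. f i * (\<Sum>j=1..Suc m. f j / real (max i j)))
      = (\<Sum>i=1..Suc m. f i * (\<Sum>j=1..m. f j / real (max i j)) + f i * ?F / real (Suc m))"
      by (intro sum.cong refl) (simp add: in1 distrib_left)
    also have "\<dots> = (\<Sum>i=1..Suc m. f i * (\<Sum>j=1..m. f j / real (max i j))) + (\<Sum>i=1..Suc m. f i * ?F / real (Suc m))"
      by (rule sum.distrib)
    also have "(\<Sum>i=1..Suc m. f i * ?F / real (Suc m)) = S (Suc m) * ?F / real (Suc m)"
      unfolding S_def sum_divide_distrib[symmetric] sum_distrib_right[symmetric] ..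
    finally show ?thesis .
  qed
  also have "(\<Sum>i=1..Suc m. f i * (\<Sum>j=1..m. f j / real (max i j)))
      = (\<Sum>i=1..m. f i * (\<Sum>j=1..m. f j / real (max i j))) + ?F * S m / real (Suc m)"
    by (simp add: S_def max_def sum_divide_distrib sum_distrib_left)
  also have "(\<Sum>i=1..m. f i * (\<Sum>j=1..m. f j / real (max i j)))
     = (\<Sum>k=1..<m. (S k)^2 / (real k * real (Suc k))) + (S m)^2 / real m" by (rule Suc.IH)
  finally have L: "(\<Sum>i=1..Suc m. f i * (\<Sum>j=1..Suc m. f j / real (max i j)))
     = (\<Sum>k=1..<m. (S k)^2 / (real k * real (Suc k))) + (S m)^2 / real m
       + ?F * S m / real (Suc m) + S (Suc m) * ?F / real (Suc m)" by simp
  have SS: "S (Suc m) = S m + ?F" by (simp add: S_def)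
  have R: "(\<Sum>k=1..<Suc m. (S k)^2 / (real k * real (Suc k))) + (S (Suc m))^2 / real (Suc m)
     = (\<Sum>k=1..<m. (S k)^2 / (real k * real (Suc k))) + (S m)^2 / (real m * real (Suc m)) + (S (Suc m))^2 / real (Suc m)"
  proof (cases m)
    case 0 then show ?thesis by (simp add: S_def)
  next
    case (Suc m') then show ?thesis by simp
  qed
  have key: "(S m)^2 / real m + ?F * S m / real (Suc m) + S (Suc m) * ?F / real (Suc m)
      = (S m)^2 / (real m * real (Suc m)) + (S (Suc m))^2 / real (Suc m)"
  proof (cases "m = 0")
    case True then show ?thesis by (simp add: S_def power2_eq_square)
  next
    case False
    define a where "a = real m"
    have a: "a > 0" using False by (simp add: a_def)
    have ra: "real (Suc m) = a + 1" by (simp add: a_def)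
    have a1: "a + 1 \<noteq> 0" "a \<noteq> 0" "a * (a + 1) \<noteq> 0" using a by auto
    show ?thesis unfolding SS ra a_def[symmetric] using a1
      by (simp add: divide_simps power2_eq_square) (simp add: algebra_simps)
  qed
  show ?case unfolding L R using key by simp
qed

lemma sq_le_S:
  fixes f :: "nat \<Rightarrow> real"
  defines "S \<equiv> \<lambda>k. \<Sum>j=1..k. f j"
  shows "(\<Sum>k=1..n. (f k)^2) \<le> 4 * (\<Sum>k=1..n. (S k)^2) - 2 * (S n)^2"
proof (induction n)
  case 0 then show ?case by (simp add: S_def)
next
  case (Suc n)
  have SS: "S (Suc n) = S n + f (Suc n)" by (simp add: S_def)
  have "(f (Suc n))^2 \<le> 2 * (S (Suc n))^2 + 2 * (S n)^2"
    using zero_le_power2[of "f (Suc n) + 2 * S n"] unfolding SS by (simp add: power2_eq_square algebra_simps)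
  then show ?case using Suc by simp
qed

lemma lower_nat:
  fixes f :: "nat \<Rightarrow> real"
  assumes n: "n \<ge> 1"
  shows "(\<Sum>i=1..n. (f i)^2) / (4 * (real n)^2) \<le> (\<Sum>i=1..n. f i * (\<Sum>j=1..n. f j / real (max i j)))"
proof -
  define S where "S = (\<lambda>k. \<Sum>j=1..k. f j)"
  have np: "real n > 0" using n by simp
  have a: "(\<Sum>k=1..<n. (S k)^2 / (real n)^2) \<le> (\<Sum>k=1..<n. (S k)^2 / (real k * real (Suc k)))"
  proof (intro sum_mono)
    fix k assume k: "k \<in> {1..<n}"
    have "real k * real (Suc k) \<le> real n * real n" using k
      by (intro mult_mono) auto
    moreover have "real k * real (Suc k) > 0" using k by simp
    ultimately show "(S k)^2 / (real n)^2 \<le> (S k)^2 / (real k * real (Suc k))"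
      by (intro divide_left_mono) (auto simp: power2_eq_square)
  qed
  have b: "(S n)^2 / (real n)^2 \<le> (S n)^2 / real n"
    using n by (intro divide_left_mono) (auto simp: power2_eq_square)
  have "{1..n} = insert n {1..<n}" using n by auto
  hence c: "(\<Sum>k=1..n. (S k)^2) / (real n)^2 = (\<Sum>k=1..<n. (S k)^2 / (real n)^2) + (S n)^2 / (real n)^2"
    by (simp add: sum_divide_distrib add_divide_distrib)
  have d: "(\<Sum>i=1..n. (f i)^2) / (4 * (real n)^2) \<le> (\<Sum>k=1..n. (S k)^2) / (real n)^2"
  proof -
    have "(\<Sum>i=1..n. (f i)^2) \<le> 4 * (\<Sum>k=1..n. (S k)^2)"
      using sq_le_S[of f n] unfolding S_def by (smt (verit) zero_le_power2)
    then show ?thesis using np by (simp add: field_simps)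
  qed
  show ?thesis unfolding Q_eq[of f n] using a b c d unfolding S_def by linarith
qed



lemma idx_strict: assumes "i < i'" shows "idx i < idx (i' :: 'n::{finite,linorder})"
proof -
  have "{j. j \<le> i} \<subseteq> {j. j \<le> i'}" using assms by auto
  moreover have "i' \<notin> {j. j \<le> i}" using assms by auto
  moreover have "i' \<in> {j. j \<le> i'}" by simp
  ultimately have "{j. j \<le> i} \<subset> {j. j \<le> i'}" by blast
  then show ?thesis unfolding idx_def by (intro psubset_card_mono) auto
qed

lemma idx_inj: "inj (idx :: 'n::{finite,linorder} \<Rightarrow> nat)"
  by (metis idx_strict injI less_irrefl neqE)

lemma idx_range: "idx (i :: 'n::{finite,linorder}) \<in> {1..CARD('n)}"
proof -
  have "card {j. j \<le> i} \<ge> 1" by (metis (mono_tags) One_nat_def Suc_leI card_gt_0_iff empty_iff finite mem_Collect_eq order_refl)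
  moreover have "card {j. j \<le> i} \<le> CARD('n)" by (intro card_mono) auto
  ultimately show ?thesis by (simp add: idx_def)
qed

lemma idx_bij: "bij_betw (idx :: 'n::{finite,linorder} \<Rightarrow> nat) UNIV {1..CARD('n)}"
proof -
  have "idx ` (UNIV :: 'n set) \<subseteq> {1..CARD('n)}" using idx_range by blast
  moreover have "card (idx ` (UNIV :: 'n set)) = card {1..CARD('n)}"
    using card_image[OF idx_inj] by simp
  ultimately have "idx ` (UNIV :: 'n set) = {1..CARD('n)}"
    by (intro card_subset_eq) auto
  then show ?thesis using idx_inj by (simp add: bij_betw_def)
qed

lemma sum_idx: "(\<Sum>i\<in>(UNIV :: 'n::{finite,linorder} set). h (idx i)) = (\<Sum>k=1..CARD('n). h k)"
  using sum.reindex_bij_betw[OF idx_bij] .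

lemma vec_norm_sq: "(norm (x :: real ^ 'n))^2 = (\<Sum>i\<in>UNIV. (x $ i)^2)"
  unfolding power2_norm_eq_inner inner_vec_def by (simp add: power2_eq_square)

lemma transfer:
  fixes x :: "real ^ 'n::{finite,linorder}"
  defines "e \<equiv> inv_into UNIV (idx :: 'n \<Rightarrow> nat)"
  defines "f \<equiv> \<lambda>k. x $ e k"
  defines "g \<equiv> \<lambda>k. \<Sum>j=1..CARD('n). f j / real (max k j)"
  shows "(norm x)^2 = (\<Sum>k=1..CARD('n). (f k)^2)"
    and "(norm (Kmat *v x))^2 = (\<Sum>k=1..CARD('n). (g k)^2)"
    and "inner x (Kmat *v x) = (\<Sum>k=1..CARD('n). f k * g k)"
proof -
  have xf: "x $ i = f (idx i)" for i by (simp add: f_def e_def idx_inj)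
  have Kx: "(Kmat *v x) $ i = g (idx i)" for i
  proof -
    have "(Kmat *v x) $ i = (\<Sum>j\<in>(UNIV :: 'n set). f (idx j) / real (max (idx i) (idx j)))"
      unfolding matrix_vector_mult_def Kmat_def xf by simp
    also have "\<dots> = g (idx i)" unfolding g_def by (rule sum_idx)
    finally show ?thesis .
  qed
  show "(norm x)^2 = (\<Sum>k=1..CARD('n). (f k)^2)"
    unfolding vec_norm_sq xf by (rule sum_idx)
  show "(norm (Kmat *v x))^2 = (\<Sum>k=1..CARD('n). (g k)^2)"
    unfolding vec_norm_sq Kx by (rule sum_idx)
  show "inner x (Kmat *v x) = (\<Sum>k=1..CARD('n). f k * g k)"
    unfolding inner_vec_def Kx xf using sum_idx[where h="\<lambda>k. f k * g k", where 'n='n] by simp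
qed

lemma K_upper:
  fixes x :: "real ^ 'n::{finite,linorder}"
  shows "norm ((Kmat :: real ^ 'n::{finite,linorder} ^ 'n::{finite,linorder}) *v x) \<le> 4 * norm x"
proof -
  have "(norm (Kmat *v x))^2 \<le> 16 * (norm x)^2"
    using upper_nat[of "\<lambda>k. x $ inv idx k" "CARD('n)"] transfer(1,2)[of x] by simp
  also have "\<dots> = (4 * norm x)^2" by (simp add: power2_eq_square)
  finally show ?thesis by (rule power2_le_imp_le) simp
qed

lemma K_lower:
  fixes x :: "real ^ 'n::{finite,linorder}"
  shows "norm x \<le> 4 * real CARD('n::{finite,linorder})^2 * norm ((Kmat :: real ^ 'n::{finite,linorder} ^ 'n::{finite,linorder}) *v x)"
proof -
  define c where "c = 4 * real CARD('n)^2"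
  have c: "c > 0" by (simp add: c_def)
  have "(norm x)^2 / c \<le> inner x (Kmat *v x)"
    using lower_nat[of "CARD('n)" "\<lambda>k. x $ inv idx k"] transfer(1,3)[of x] unfolding c_def
    by (simp add: Suc_le_eq)
  also have "\<dots> \<le> norm x * norm (Kmat *v x)" by (rule norm_cauchy_schwarz)
  finally have h: "(norm x)^2 \<le> c * (norm x * norm (Kmat *v x))" using c by (simp add: field_simps)
  show ?thesis
  proof (cases "x = 0")
    case True then show ?thesis by simp
  next
    case False
    then have "norm x > 0" by simp
    with h have "norm x \<le> c * norm (Kmat *v x)"
      by (simp add: power2_eq_square mult.assoc mult.left_commute[of c])
    then show ?thesis by (simp add: c_def)
  qed
qed

theorem proposition4:
  shows "invertible (Kmat :: real ^ 'n::{finite,linorder} ^ 'n::{finite,linorder})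
     \<and> onorm (\<lambda>x. (Kmat :: real ^ 'n::{finite,linorder} ^ 'n::{finite,linorder}) *v x) \<le> 4
     \<and> onorm (\<lambda>x. matrix_inv (Kmat :: real ^ 'n::{finite,linorder} ^ 'n::{finite,linorder}) *v x)
         \<le> 4 * real (CARD('n::{finite,linorder}))^2"
proof -
  have ker: "\<forall>x. (Kmat :: real ^ 'n::{finite,linorder} ^ 'n::{finite,linorder}) *v x = 0 \<longrightarrow> x = 0"
    using K_lower by (metis mult_zero_right norm_le_zero_iff norm_zero)
  have inv: "invertible (Kmat :: real ^ 'n::{finite,linorder} ^ 'n::{finite,linorder})"
    using ker unfolding invertible_left_inverse matrix_left_invertible_ker .
  have right: "(Kmat :: real ^ 'n::{finite,linorder} ^ 'n::{finite,linorder}) ** matrix_inv Kmat = mat 1"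
    using inv unfolding invertible_def matrix_inv_def by (rule someI_ex[THEN conjunct1])
  have o1: "onorm (\<lambda>x. (Kmat :: real ^ 'n::{finite,linorder} ^ 'n::{finite,linorder}) *v x) \<le> 4"
    by (rule onorm_le) (rule K_upper)
  have o2: "onorm (\<lambda>x. matrix_inv (Kmat :: real ^ 'n::{finite,linorder} ^ 'n::{finite,linorder}) *v x)
         \<le> 4 * real (CARD('n::{finite,linorder}))^2"
  proof (rule onorm_le)
    fix y :: "real ^ 'n::{finite,linorder}"
    have "norm (matrix_inv (Kmat :: real ^ 'n::{finite,linorder} ^ 'n::{finite,linorder}) *v y)
        \<le> 4 * real CARD('n::{finite,linorder})^2 * norm (Kmat *v (matrix_inv Kmat *v y))"
      by (rule K_lower)
    also have "Kmat *v (matrix_inv Kmat *v y) = y"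
      by (simp add: matrix_vector_mul_assoc right)
    finally show "norm (matrix_inv (Kmat :: real ^ 'n::{finite,linorder} ^ 'n::{finite,linorder}) *v y)
        \<le> 4 * real CARD('n::{finite,linorder})^2 * norm y" .
  qed
  show ?thesis using inv o1 o2 by blast
qed

end
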